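(* The following linear maps $\mathcal{W}\to\mathcal{F}_\alpha\otimes\mathcal{F}_\beta$ (for the indicated $(\alpha,\beta)$) are 1-cocycles that are not 1-coboundaries: $\mathrm{d}^1_{0,1}(L_n)=n^2v_0\otimes v_n$ into $\mathcal{F}_0\otimes\mathcal{F}_1$; $\mathrm{d}^1_{1,0}(L_n)=n^2v_n\otimes v_0$ into $\mathcal{F}_1\otimes\mathcal{F}_0$; $\mathrm{d}_{0,2}(L_n)=n^3v_0\otimes v_n$ into $\mathcal{F}_0\otimes\mathcal{F}_2$; $\mathrm{d}_{2,0}(L_n)=n^3v_n\otimes v_0$ into $\mathcal{F}_2\otimes\mathcal{F}_0$; and $\mathrm{d}_{1,1}$ into $\mathcal{F}_1\otimes\mathcal{F}_1$ with $\mathrm{d}_{1,1}(L_n)=\sum_{i=1}^{n}i(n-i)v_i\otimes v_{n-i}$ for $n\ge1$, $\mathrm{d}_{1,1}(L_0)=0$, $\mathrm{d}_{1,1}(L_n)=-\sum_{i=n}^{-1}i(n-i)v_i\otimes v_{n-i}$ for $n\le-1$. Moreover, $\mathrm{d}^1_{0,1}$ and $\mathrm{d}_{0,1}$ are linearly independent, and $\mathrm{d}^1_{1,0}$ and $\mathrm{d}_{1,0}$ are linearly independent, where $\mathrm{d}_{0,1}(L_n)$ and $\mathrm{d}_{1,0}(L_n)$ are given by $\sum_{i=0}^{n-1}(i-n\beta)v_i\otimes v_{n-i}$ for $n\ge1$, $0$ for $n=0$, $-\sum_{i=n}^{-1}(i-n\beta)v_i\otimes v_{n-i}$ for $n\le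 -1$, with $\beta=1$, resp. $\beta=0$.
   Context: The Witt algebra $\mathcal{W}$ has basis $\{L_n\mid n\in\mathbb{Z}\}$ and bracket $[L_m,L_n]=(m-n)L_{m+n}$. $\mathcal{F}_\alpha$ has basis $\{v_n\}$ with $L_m\cdot v_n=-(\alpha m+n)v_{m+n}$; $\mathcal{F}_\alpha\otimes\mathcal{F}_\beta$ is a $\mathcal{W}$-module via $L_m\cdot(v_i\otimes v_j)=-(i+\alpha m)v_{m+i}\otimes v_j-(j+\beta m)v_i\otimes v_{m+j}$. A 1-cocycle is a linear map $d$ with $d([x,y])=x\cdot d(y)-y\cdot d(x)$; a 1-coboundary is a map $x\mapsto x\cdot v$ for a fixed $v$ in the module. *)

theory Defs
  imports Complex_Main "HOL-Library.Function_Algebras"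
begin

(* Witt algebra W over the complex numbers: elements are finitely supported
   coefficient functions  x :: int => complex,  x = sum_n x n L_n. *)
type_synonym witt = "int \<Rightarrow> complex"
(* Elements of F_alpha (x) F_beta: finitely supported u :: int*int => complex,
   u = sum_{(i,j)} u(i,j) v_i (x) v_j. *)
type_synonym tens = "int \<times> int \<Rightarrow> complex"

definition supp :: "('a \<Rightarrow> complex) \<Rightarrow> 'a set" where
  "supp f = {a. f a \<noteq> 0}"

definition Witt :: "witt set" where
  "Witt = {x. finite (supp x)}"

definition Tens :: "tens set" where
  "Tens = {u. finite (supp u)}"

definition L :: "int \<Rightarrow> witt" where
  "L n = (\<lambda>k. if k = n then 1 else 0)"

definition vv :: "int \<Rightarrow> int \<Rightarrow> tens" where
  "vv i j = (\<lambda>p. if p = (i, j) then 1 else 0)"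

definition smul :: "complex \<Rightarrow> tens \<Rightarrow> tens" where
  "smul c u = (\<lambda>p. c * u p)"

(* Lie bracket: [sum x_m L_m, sum y_n L_n] = sum (m - n) x_m y_n L_{m+n} *)
definition witt_br :: "witt \<Rightarrow> witt \<Rightarrow> witt" where
  "witt_br x y = (\<lambda>k. \<Sum>m\<in>supp x. of_int (m - (k - m)) * x m * y (k - m))"

(* action of W on F_alpha (x) F_beta:
   L_m.(v_i (x) v_j) = -(i + alpha m) v_{m+i} (x) v_j - (j + beta m) v_i (x) v_{m+j} *)
definition act :: "complex \<Rightarrow> complex \<Rightarrow> witt \<Rightarrow> tens \<Rightarrow> tens" where
  "act \<alpha> \<beta> x u = (\<lambda>(a, b). \<Sum>m\<in>supp x. x m *
      ( - (of_int (a - m) + \<alpha> * of_int m) * u (a - m, b)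
        - (of_int (b - m) + \<beta> * of_int m) * u (a, b - m)))"

definition lin_ext :: "(int \<Rightarrow> tens) \<Rightarrow> witt \<Rightarrow> tens" where
  "lin_ext D x = (\<Sum>n\<in>supp x. smul (x n) (D n))"

definition is_cocycle :: "complex \<Rightarrow> complex \<Rightarrow> (int \<Rightarrow> tens) \<Rightarrow> bool" where
  "is_cocycle \<alpha> \<beta> D \<longleftrightarrow> (\<forall>n. D n \<in> Tens) \<and>
     (\<forall>x\<in>Witt. \<forall>y\<in>Witt. lin_ext D (witt_br x y) =
         act \<alpha> \<beta> x (lin_ext D y) - act \<alpha> \<beta> y (lin_ext D x))"

definition is_coboundary :: "complex \<Rightarrow> complex \<Rightarrow> (int \<Rightarrow> tens) \<Rightarrow> bool" where
  "is_coboundary \<alpha> \<beta> D \<longleftrightarrow> (\<exists>v\<in>Tens. \<forall>x\<in>Witt. lin_ext D x = act \<alpha> \<beta> x v)"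

definition lin_indep2 :: "(int \<Rightarrow> tens) \<Rightarrow> (int \<Rightarrow> tens) \<Rightarrow> bool" where
  "lin_indep2 D1 D2 \<longleftrightarrow> (\<forall>a b. (\<forall>x\<in>Witt. smul a (lin_ext D1 x) + smul b (lin_ext D2 x) = 0)
       \<longrightarrow> a = 0 \<and> b = 0)"

definition d1_01 :: "int \<Rightarrow> tens" where
  "d1_01 n = smul (of_int (n^2)) (vv 0 n)"

definition d1_10 :: "int \<Rightarrow> tens" where
  "d1_10 n = smul (of_int (n^2)) (vv n 0)"

definition d_02 :: "int \<Rightarrow> tens" where
  "d_02 n = smul (of_int (n^3)) (vv 0 n)"

definition d_20 :: "int \<Rightarrow> tens" where
  "d_20 n = smul (of_int (n^3)) (vv n 0)"

definition d_11 :: "int \<Rightarrow> tens" where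
  "d_11 n = (if n \<ge> 1 then (\<Sum>i\<in>{1..n}. smul (of_int (i * (n - i))) (vv i (n - i)))
             else if n = 0 then 0
             else - (\<Sum>i\<in>{n..-1}. smul (of_int (i * (n - i))) (vv i (n - i))))"

definition d_beta :: "complex \<Rightarrow> int \<Rightarrow> tens" where
  "d_beta \<beta> n = (if n \<ge> 1 then (\<Sum>i\<in>{0..n-1}. smul (of_int i - of_int n * \<beta>) (vv i (n - i)))
             else if n = 0 then 0
             else - (\<Sum>i\<in>{n..-1}. smul (of_int i - of_int n * \<beta>) (vv i (n - i))))"

definition d_01 :: "int \<Rightarrow> tens" where "d_01 = d_beta 1"
definition d_10 :: "int \<Rightarrow> tens" where "d_10 = d_beta 0"

end

theory Submission
  imports Defs
begin

lemma sum_fun_apply: "(\<Sum>i\<in>I. f i) x = (\<Sum>i\<in>I. f i x)"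
  by (induction I rule: infinite_finite_induct) (auto simp: zero_fun_def plus_fun_def)

definition actL :: "complex \<Rightarrow> complex \<Rightarrow> int \<Rightarrow> tens \<Rightarrow> tens" where
  "actL \<alpha> \<beta> m u = (\<lambda>(a, b). - (of_int (a - m) + \<alpha> * of_int m) * u (a - m, b)
        - (of_int (b - m) + \<beta> * of_int m) * u (a, b - m))"

lemma act_sum: "act \<alpha> \<beta> x u p = (\<Sum>m\<in>supp x. x m * actL \<alpha> \<beta> m u p)"
  by (cases p) (simp add: act_def actL_def)

lemma act_sum_S:
  assumes "finite S" "supp x \<subseteq> S"
  shows "act \<alpha> \<beta> x u p = (\<Sum>m\<in>S. x m * actL \<alpha> \<beta> m u p)"
  unfolding act_sum
  by (rule sum.mono_neutral_left) (use assms in \<open>auto simp: supp_def\<close>)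

lemma lin_ext_pt: "lin_ext D x p = (\<Sum>n\<in>supp x. x n * D n p)"
  by (simp add: lin_ext_def smul_def sum_fun_apply)

lemma lin_ext_S:
  assumes "finite S" "supp x \<subseteq> S"
  shows "lin_ext D x p = (\<Sum>n\<in>S. x n * D n p)"
  unfolding lin_ext_pt
  by (rule sum.mono_neutral_left) (use assms in \<open>auto simp: supp_def\<close>)

lemma actL_lin:
  "actL \<alpha> \<beta> m (\<lambda>q. \<Sum>n\<in>T. y n * D n q) p = (\<Sum>n\<in>T. y n * actL \<alpha> \<beta> m (D n) p)"
proof (cases p)
  case (Pair a b)
  have "actL \<alpha> \<beta> m (\<lambda>q. \<Sum>n\<in>T. y n * D n q) p
      = (\<Sum>n\<in>T. - (of_int (a - m) + \<alpha> * of_int m) * (y n * D n (a - m, b)))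
        - (\<Sum>n\<in>T. (of_int (b - m) + \<beta> * of_int m) * (y n * D n (a, b - m)))"
    by (simp add: actL_def Pair sum_distrib_left)
  also have "\<dots> = (\<Sum>n\<in>T. y n * actL \<alpha> \<beta> m (D n) p)"
    by (simp add: sum_subtractf[symmetric] actL_def Pair algebra_simps)
  finally show ?thesis .
qed

lemma reindex_shift:
  fixes h :: "int \<Rightarrow> complex"
  assumes "finite K" "finite T" "\<And>n. n \<notin> T \<Longrightarrow> h n = 0" "T \<subseteq> (\<lambda>k. k - m) ` K"
  shows "(\<Sum>k\<in>K. h (k - m)) = (\<Sum>n\<in>T. h n)"
proof -
  have "(\<Sum>k\<in>K. h (k - m)) = (\<Sum>n\<in>(\<lambda>k. k - m) ` K. h n)"
    by (subst sum.reindex) (auto simp: inj_on_diff_right)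
  also have "\<dots> = (\<Sum>n\<in>T. h n)"
    by (rule sum.mono_neutral_right) (use assms in auto)
  finally show ?thesis .
qed

lemma cocycle_crit:
  assumes tens: "\<forall>n. D n \<in> Tens"
    and basis: "\<And>m n p. of_int (m - n) * D (m + n) p = actL \<alpha> \<beta> m (D n) p - actL \<alpha> \<beta> n (D m) p"
  shows "is_cocycle \<alpha> \<beta> D"
  unfolding is_cocycle_def
proof (intro conjI ballI)
  show "\<forall>n. D n \<in> Tens" by (rule tens)
  fix x y assume x: "x \<in> Witt" and y: "y \<in> Witt"
  define S where "S = supp x"
  define T where "T = supp y"
  have fS: "finite S" and fT: "finite T" using x y by (auto simp: S_def T_def Witt_def)
  have ly: "lin_ext D y = (\<lambda>q. \<Sum>n\<in>T. y n * D n q)" by (rule ext) (simp add: lin_ext_pt T_def)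
  have lx: "lin_ext D x = (\<lambda>q. \<Sum>m\<in>S. x m * D m q)" by (rule ext) (simp add: lin_ext_pt S_def)
  show "lin_ext D (witt_br x y) = act \<alpha> \<beta> x (lin_ext D y) - act \<alpha> \<beta> y (lin_ext D x)"
  proof (rule ext)
    fix p
    define g where "g m n = x m * y n * (of_int (m - n) * D (m + n) p)" for m n
    have R: "(act \<alpha> \<beta> x (lin_ext D y) - act \<alpha> \<beta> y (lin_ext D x)) p = (\<Sum>m\<in>S. \<Sum>n\<in>T. g m n)"
    proof -
      have "(act \<alpha> \<beta> x (lin_ext D y) - act \<alpha> \<beta> y (lin_ext D x)) p
          = (\<Sum>m\<in>S. x m * (\<Sum>n\<in>T. y n * actL \<alpha> \<beta> m (D n) p))
            - (\<Sum>n\<in>T. y n * (\<Sum>m\<in>S. x m * actL \<alpha> \<beta> n (D m) p))"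
        by (simp add: act_sum ly lx actL_lin S_def T_def)
      also have "\<dots> = (\<Sum>m\<in>S. \<Sum>n\<in>T. x m * y n * actL \<alpha> \<beta> m (D n) p)
            - (\<Sum>m\<in>S. \<Sum>n\<in>T. x m * y n * actL \<alpha> \<beta> n (D m) p)"
        by (subst (2) sum.swap) (simp add: sum_distrib_left algebra_simps)
      also have "\<dots> = (\<Sum>m\<in>S. \<Sum>n\<in>T. x m * y n * (actL \<alpha> \<beta> m (D n) p - actL \<alpha> \<beta> n (D m) p))"
        by (simp add: sum_subtractf[symmetric] algebra_simps)
      also have "\<dots> = (\<Sum>m\<in>S. \<Sum>n\<in>T. g m n)"
        by (simp only: g_def basis)
      finally show ?thesis .
    qed
    define K where "K = (\<lambda>(m, n). m + n) ` (S \<times> T)"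
    have fK: "finite K" using fS fT by (simp add: K_def)
    have suppK: "supp (witt_br x y) \<subseteq> K"
    proof
      fix k assume k: "k \<in> supp (witt_br x y)"
      show "k \<in> K"
      proof (rule ccontr)
        assume nk: "k \<notin> K"
        have "\<forall>m\<in>supp x. y (k - m) = 0"
        proof
          fix m assume m: "m \<in> supp x"
          show "y (k - m) = 0"
          proof (rule ccontr)
            assume "y (k - m) \<noteq> 0"
            then have "(m, k - m) \<in> S \<times> T" using m by (auto simp: S_def T_def supp_def)
            then have "k \<in> K" unfolding K_def by (metis (no_types, lifting) add_diff_cancel_left' case_prod_conv image_eqI add.commute diff_add_cancel)
            with nk show False by simp
          qed
        qed
        then have "witt_br x y k = 0" by (simp add: witt_br_def)
        with k show False by (simp add: supp_def)
      qed
    qed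
    have "lin_ext D (witt_br x y) p = (\<Sum>k\<in>K. witt_br x y k * D k p)"
      by (rule lin_ext_S[OF fK suppK])
    also have "\<dots> = (\<Sum>k\<in>K. \<Sum>m\<in>S. g m (k - m))"
    proof (rule sum.cong[OF refl])
      fix k
      have "witt_br x y k * D k p = (\<Sum>m\<in>S. of_int (m - (k - m)) * x m * y (k - m) * D k p)"
        by (simp add: witt_br_def S_def sum_distrib_right)
      also have "\<dots> = (\<Sum>m\<in>S. g m (k - m))"
        by (rule sum.cong[OF refl]) (simp add: g_def algebra_simps)
      finally show "witt_br x y k * D k p = (\<Sum>m\<in>S. g m (k - m))" .
    qed
    also have "\<dots> = (\<Sum>m\<in>S. \<Sum>k\<in>K. g m (k - m))"
      by (rule sum.swap)
    also have "\<dots> = (\<Sum>m\<in>S. \<Sum>n\<in>T. g m n)"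
    proof (rule sum.cong[OF refl])
      fix m assume m: "m \<in> S"
      show "(\<Sum>k\<in>K. g m (k - m)) = (\<Sum>n\<in>T. g m n)"
      proof (rule reindex_shift[OF fK fT])
        show "g m n = 0" if "n \<notin> T" for n using that by (simp add: g_def T_def supp_def)
        show "T \<subseteq> (\<lambda>k. k - m) ` K"
        proof
          fix n assume "n \<in> T"
          then have "m + n \<in> K" using m by (force simp: K_def)
          then show "n \<in> (\<lambda>k. k - m) ` K" by (metis add_diff_cancel_left' image_eqI)
        qed
      qed
    qed
    finally show "lin_ext D (witt_br x y) p = (act \<alpha> \<beta> x (lin_ext D y) - act \<alpha> \<beta> y (lin_ext D x)) p"
      using R by simp
  qed
qed


definition actI :: "int \<Rightarrow> int \<Rightarrow> int \<Rightarrow> (int \<Rightarrow> int \<Rightarrow> int \<Rightarrow> int) \<Rightarrow> int \<Rightarrow> int \<Rightarrow> int \<Rightarrow> int" where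
  "actI al be m f n a b = - ((a - m) + al * m) * f n (a - m) b - ((b - m) + be * m) * f n a (b - m)"

lemma basis_transfer:
  assumes cf: "\<And>n a b. D n (a, b) = of_int (f n a b)"
    and H: "\<And>m n a b. (m - n) * f (m + n) a b = actI al be m f n a b - actI al be n f m a b"
  shows "of_int (m - n) * D (m + n) p = actL (of_int al) (of_int be) m (D n) p - actL (of_int al) (of_int be) n (D m) p"
proof (cases p)
  case (Pair a b)
  have e: "actL (of_int al) (of_int be) k (D j) (a, b) = of_int (actI al be k f j a b)" for k j
    by (simp add: actL_def actI_def cf)
  have "of_int ((m - n) * f (m + n) a b) = (of_int (actI al be m f n a b - actI al be n f m a b) :: complex)"
    using H by simp
  then show ?thesis by (simp add: Pair e cf del: of_int_diff of_int_mult) (metis of_int_diff of_int_mult)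
qed

lemma tens_crit:
  assumes cf: "\<And>a b. u (a, b) = of_int (f a b)" and F: "finite F" and nz: "\<And>a b. f a b \<noteq> 0 \<Longrightarrow> (a, b) \<in> F"
  shows "u \<in> Tens"
proof -
  have "supp u \<subseteq> F" using nz by (auto simp: supp_def cf)
  then show ?thesis using F by (auto simp: Tens_def intro: finite_subset)
qed

definition f11 :: "int \<Rightarrow> int \<Rightarrow> int \<Rightarrow> int" where
  "f11 n a b = (if a + b = n then (if a > 0 \<and> b > 0 then a * b else if a < 0 \<and> b < 0 then - (a * b) else 0) else 0)"

lemma tw11: "2 * f11 n a b = (if a + b = n then a * \<bar>b\<bar> + \<bar>a\<bar> * b else 0)"
  unfolding f11_def
  by (cases "a > 0"; cases "b > 0"; cases "a < 0"; cases "b < 0") (simp_all add: abs_if)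

lemma H11: "(m - n) * f11 (m + n) a b = actI 1 1 m f11 n a b - actI 1 1 n f11 m a b"
proof -
  have "2 * ((m - n) * f11 (m + n) a b) = 2 * (actI 1 1 m f11 n a b - actI 1 1 n f11 m a b)"
  proof -
    have L: "2 * ((m - n) * f11 (m + n) a b) = (m - n) * (2 * f11 (m + n) a b)" by simp
    have R: "2 * (actI 1 1 m f11 n a b - actI 1 1 n f11 m a b) =
      - a * (2 * f11 n (a - m) b) - b * (2 * f11 n a (b - m))
      + a * (2 * f11 m (a - n) b) + b * (2 * f11 m a (b - n))"
      unfolding actI_def by (simp add: algebra_simps)
    show ?thesis
    proof (cases "a + b = m + n")
      case True
      then have hb: "b = m + n - a" by simp
      have e1: "\<bar>b - m\<bar> = \<bar>a - n\<bar>" "\<bar>b - n\<bar> = \<bar>a - m\<bar>"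
        using hb by (simp_all add: abs_minus_commute)
      have c: "a - m + b = n" "a + (b - m) = n" "a - n + b = m" "a + (b - n) = m" "a + b = m + n"
        using hb by simp_all
      show ?thesis unfolding L R tw11 using c e1 apply (simp only: if_True)
        unfolding e1 hb by (simp add: algebra_simps)
    next
      case False
      then have c: "a - m + b \<noteq> n" "a + (b - m) \<noteq> n" "a - n + b \<noteq> m" "a + (b - n) \<noteq> m" by auto
      show ?thesis unfolding L R tw11 using False c by simp
    qed
  qed
  then show ?thesis by simp
qed
definition f01 :: "int \<Rightarrow> int \<Rightarrow> int \<Rightarrow> int" where "f01 n a b = (if a = 0 \<and> b = n then n^2 else 0)"
definition f10 :: "int \<Rightarrow> int \<Rightarrow> int \<Rightarrow> int" where "f10 n a b = (if a = n \<and> b = 0 then n^2 else 0)"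
definition f02 :: "int \<Rightarrow> int \<Rightarrow> int \<Rightarrow> int" where "f02 n a b = (if a = 0 \<and> b = n then n^3 else 0)"
definition f20 :: "int \<Rightarrow> int \<Rightarrow> int \<Rightarrow> int" where "f20 n a b = (if a = n \<and> b = 0 then n^3 else 0)"
lemma H01: "(m - n) * f01 (m + n) a b = actI 0 1 m f01 n a b - actI 0 1 n f01 m a b"
proof -
  have z: "- ((a - m) + 0 * m) * f01 n (a - m) b = 0" "- ((a - n) + 0 * n) * f01 m (a - n) b = 0" by (simp_all add: f01_def)
  show ?thesis
  proof (cases "a = 0 \<and> b = m + n")
    case True
    then have v: "f01 (m+n) a b = (m+n)^2" "f01 n a (b - m) = n^2" "f01 m a (b - n) = m^2"
      by (simp_all add: f01_def)
    show ?thesis using True unfolding actI_def z v by (simp add: power2_eq_square algebra_simps)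
  next
    case False
    then have v: "f01 (m+n) a b = 0" "f01 n a (b - m) = 0" "f01 m a (b - n) = 0"
      by (auto simp add: f01_def)
    then show ?thesis unfolding actI_def z by simp
  qed
qed
lemma H02: "(m - n) * f02 (m + n) a b = actI 0 2 m f02 n a b - actI 0 2 n f02 m a b"
proof -
  have z: "- ((a - m) + 0 * m) * f02 n (a - m) b = 0" "- ((a - n) + 0 * n) * f02 m (a - n) b = 0" by (simp_all add: f02_def)
  show ?thesis
  proof (cases "a = 0 \<and> b = m + n")
    case True
    then have v: "f02 (m+n) a b = (m+n)^3" "f02 n a (b - m) = n^3" "f02 m a (b - n) = m^3"
      by (simp_all add: f02_def)
    show ?thesis using True unfolding actI_def z v by (simp add: power3_eq_cube algebra_simps)
  next
    case False
    then have v: "f02 (m+n) a b = 0" "f02 n a (b - m) = 0" "f02 m a (b - n) = 0"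
      by (auto simp add: f02_def)
    then show ?thesis unfolding actI_def z by simp
  qed
qed
lemma H10: "(m - n) * f10 (m + n) a b = actI 1 0 m f10 n a b - actI 1 0 n f10 m a b"
proof -
  have z: "((b - m) + 0 * m) * f10 n a (b - m) = 0" "((b - n) + 0 * n) * f10 m a (b - n) = 0" by (simp_all add: f10_def)
  show ?thesis
  proof (cases "a = m + n \<and> b = 0")
    case True
    then have v: "f10 (m+n) a b = (m+n)^2" "f10 n (a - m) b = n^2" "f10 m (a - n) b = m^2"
      by (simp_all add: f10_def)
    show ?thesis using True unfolding actI_def z v by (simp add: power2_eq_square algebra_simps)
  next
    case False
    then have v: "f10 (m+n) a b = 0" "f10 n (a - m) b = 0" "f10 m (a - n) b = 0"
      by (auto simp add: f10_def)
    then show ?thesis unfolding actI_def z by simp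
  qed
qed
lemma H20: "(m - n) * f20 (m + n) a b = actI 2 0 m f20 n a b - actI 2 0 n f20 m a b"
proof -
  have z: "((b - m) + 0 * m) * f20 n a (b - m) = 0" "((b - n) + 0 * n) * f20 m a (b - n) = 0" by (simp_all add: f20_def)
  show ?thesis
  proof (cases "a = m + n \<and> b = 0")
    case True
    then have v: "f20 (m+n) a b = (m+n)^3" "f20 n (a - m) b = n^3" "f20 m (a - n) b = m^3"
      by (simp_all add: f20_def)
    show ?thesis using True unfolding actI_def z v by (simp add: power3_eq_cube algebra_simps)
  next
    case False
    then have v: "f20 (m+n) a b = 0" "f20 n (a - m) b = 0" "f20 m (a - n) b = 0"
      by (auto simp add: f20_def)
    then show ?thesis unfolding actI_def z by simp
  qed
qed

lemma cf01: "d1_01 n (a, b) = of_int (f01 n a b)" by (simp add: d1_01_def f01_def smul_def vv_def)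
lemma cf10: "d1_10 n (a, b) = of_int (f10 n a b)" by (simp add: d1_10_def f10_def smul_def vv_def)
lemma cf02: "d_02 n (a, b) = of_int (f02 n a b)" by (simp add: d_02_def f02_def smul_def vv_def)
lemma cf20: "d_20 n (a, b) = of_int (f20 n a b)" by (simp add: d_20_def f20_def smul_def vv_def)

lemma sum_vv_pt:
  assumes "finite I"
  shows "(\<Sum>i\<in>I. smul (c i) (vv i (n - i))) (a, b) = (if a \<in> I \<and> b = n - a then c a else 0)"
proof -
  have "(\<Sum>i\<in>I. smul (c i) (vv i (n - i))) (a, b) = (\<Sum>i\<in>I. if i = a then (if b = n - a then c a else 0) else 0)"
    unfolding sum_fun_apply smul_def vv_def by (rule sum.cong) auto
  also have "\<dots> = (if a \<in> I \<and> b = n - a then c a else 0)"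
    using assms by (simp add: sum.delta')
  finally show ?thesis .
qed

lemma cf11: "d_11 n (a, b) = of_int (f11 n a b)"
proof -
  consider "n \<ge> 1" | "n = 0" | "n \<le> -1" by linarith
  then show ?thesis
  proof cases
    case 1
    then have "d_11 n (a, b) = (if a \<in> {1..n} \<and> b = n - a then of_int (a * (n - a)) else 0)"
      by (simp add: d_11_def sum_vv_pt)
    then show ?thesis using 1 by (auto simp: f11_def)
  next
    case 2
    then show ?thesis by (auto simp: d_11_def f11_def)
  next
    case 3
    then have "d_11 n (a, b) = - (if a \<in> {n..-1} \<and> b = n - a then of_int (a * (n - a)) else 0)"
      by (simp add: d_11_def sum_vv_pt uminus_apply)
    then show ?thesis using 3 by (auto simp: f11_def)
  qed
qed


lemma coc01: "is_cocycle 0 1 d1_01"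
proof -
  have "is_cocycle (of_int 0) (of_int 1) d1_01"
  proof (rule cocycle_crit)
    show "\<forall>n. d1_01 n \<in> Tens"
    proof
      fix n show "d1_01 n \<in> Tens"
        by (rule tens_crit[of _ "f01 n" "{(0, n)}"]) (auto simp: cf01 f01_def split: if_splits)
    qed
    show "of_int (m - n) * d1_01 (m + n) p = actL (of_int 0) (of_int 1) m (d1_01 n) p - actL (of_int 0) (of_int 1) n (d1_01 m) p" for m n p
      by (rule basis_transfer[OF cf01 H01])
  qed
  then show ?thesis by simp
qed

lemma coc10: "is_cocycle 1 0 d1_10"
proof -
  have "is_cocycle (of_int 1) (of_int 0) d1_10"
  proof (rule cocycle_crit)
    show "\<forall>n. d1_10 n \<in> Tens"
    proof
      fix n show "d1_10 n \<in> Tens"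
        by (rule tens_crit[of _ "f10 n" "{(n, 0)}"]) (auto simp: cf10 f10_def split: if_splits)
    qed
    show "of_int (m - n) * d1_10 (m + n) p = actL (of_int 1) (of_int 0) m (d1_10 n) p - actL (of_int 1) (of_int 0) n (d1_10 m) p" for m n p
      by (rule basis_transfer[OF cf10 H10])
  qed
  then show ?thesis by simp
qed

lemma coc02: "is_cocycle 0 2 d_02"
proof -
  have "is_cocycle (of_int 0) (of_int 2) d_02"
  proof (rule cocycle_crit)
    show "\<forall>n. d_02 n \<in> Tens"
    proof
      fix n show "d_02 n \<in> Tens"
        by (rule tens_crit[of _ "f02 n" "{(0, n)}"]) (auto simp: cf02 f02_def split: if_splits)
    qed
    show "of_int (m - n) * d_02 (m + n) p = actL (of_int 0) (of_int 2) m (d_02 n) p - actL (of_int 0) (of_int 2) n (d_02 m) p" for m n p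
      by (rule basis_transfer[OF cf02 H02])
  qed
  then show ?thesis by simp
qed

lemma coc20: "is_cocycle 2 0 d_20"
proof -
  have "is_cocycle (of_int 2) (of_int 0) d_20"
  proof (rule cocycle_crit)
    show "\<forall>n. d_20 n \<in> Tens"
    proof
      fix n show "d_20 n \<in> Tens"
        by (rule tens_crit[of _ "f20 n" "{(n, 0)}"]) (auto simp: cf20 f20_def split: if_splits)
    qed
    show "of_int (m - n) * d_20 (m + n) p = actL (of_int 2) (of_int 0) m (d_20 n) p - actL (of_int 2) (of_int 0) n (d_20 m) p" for m n p
      by (rule basis_transfer[OF cf20 H20])
  qed
  then show ?thesis by simp
qed

lemma coc11: "is_cocycle 1 1 d_11"
proof -
  have "is_cocycle (of_int 1) (of_int 1) d_11"
  proof (rule cocycle_crit)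
    show "\<forall>n. d_11 n \<in> Tens"
    proof
      fix n show "d_11 n \<in> Tens"
      proof (rule tens_crit[of _ "f11 n" "(\<lambda>i. (i, n - i)) ` {-\<bar>n\<bar>..\<bar>n\<bar>}"])
        show "d_11 n (a, b) = of_int (f11 n a b)" for a b by (rule cf11)
        show "finite ((\<lambda>i. (i, n - i)) ` {-\<bar>n\<bar>..\<bar>n\<bar>})" by simp
        show "(a, b) \<in> (\<lambda>i. (i, n - i)) ` {-\<bar>n\<bar>..\<bar>n\<bar>}" if "f11 n a b \<noteq> 0" for a b
        proof -
          have "a + b = n" "\<bar>a\<bar> \<le> \<bar>n\<bar>" using that by (auto simp: f11_def split: if_splits)
          then show ?thesis by (auto intro!: image_eqI[where x = a])
        qed
      qed
    qed
    show "of_int (m - n) * d_11 (m + n) p = actL (of_int 1) (of_int 1) m (d_11 n) p - actL (of_int 1) (of_int 1) n (d_11 m) p" for m n p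
      by (rule basis_transfer[OF cf11 H11])
  qed
  then show ?thesis by simp
qed

lemma L_supp: "supp (L n) = {n}" by (auto simp: supp_def L_def)
lemma L_Witt: "L n \<in> Witt" by (simp add: Witt_def L_supp)
lemma lin_ext_L: "lin_ext D (L n) = D n" by (rule ext) (simp only: lin_ext_pt L_supp, simp add: L_def)
lemma act_L: "act \<alpha> \<beta> (L n) v p = actL \<alpha> \<beta> n v p" by (simp only: act_sum L_supp, simp add: L_def)

lemma cob_D:
  assumes "is_coboundary \<alpha> \<beta> D"
  obtains v where "finite (supp v)" "\<And>n p. D n p = actL \<alpha> \<beta> n v p"
proof -
  from assms obtain v where v: "v \<in> Tens" "\<forall>x\<in>Witt. lin_ext D x = act \<alpha> \<beta> x v"
    unfolding is_coboundary_def by blast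
  have "D n p = actL \<alpha> \<beta> n v p" for n p
  proof -
    have "lin_ext D (L n) p = act \<alpha> \<beta> (L n) v p" using v(2) L_Witt by simp
    then show ?thesis by (simp add: lin_ext_L act_L)
  qed
  with v(1) show thesis using that by (auto simp: Tens_def)
qed

lemma supp_bound:
  fixes v :: tens
  assumes "finite (supp v)"
  obtains N where "\<And>a b. N \<le> a \<or> N \<le> b \<Longrightarrow> v (a, b) = 0"
proof -
  obtain A where A: "\<forall>x\<in>fst ` supp v. x \<le> A"
    using bdd_above_finite[of "fst ` supp v"] assms by (auto simp: bdd_above_def)
  obtain B where B: "\<forall>x\<in>snd ` supp v. x \<le> B"
    using bdd_above_finite[of "snd ` supp v"] assms by (auto simp: bdd_above_def)
  show thesis
  proof (rule that[of "max A B + 1"])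
    fix a b assume h: "max A B + 1 \<le> a \<or> max A B + 1 \<le> b"
    show "v (a, b) = 0"
    proof (rule ccontr)
      assume "v (a, b) \<noteq> 0"
      then have "(a, b) \<in> supp v" by (simp add: supp_def)
      then have "a \<le> A" "b \<le> B" using A B by force+
      with h show False by linarith
    qed
  qed
qed

lemma helper1:
  fixes c :: complex
  assumes "K \<ge> 1" "\<And>k. k \<ge> K \<Longrightarrow> of_int k * (of_int k + c) = 0"
  shows False
proof -
  have "of_int K * (of_int K + c) = 0" using assms by simp
  then have "of_int K + c = 0" using assms(1) by simp
  moreover have "of_int (K + 1) * (of_int (K + 1) + c) = 0" using assms(2)[of "K + 1"] by simp
  then have "of_int (K + 1) + c = 0" using assms(1) by (simp del: of_int_add)
  ultimately have "(of_int (K + 1) :: complex) = of_int K" by (simp add: algebra_simps)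
  then show False by simp
qed

lemma helper2:
  fixes c :: complex
  assumes "K \<ge> 1" "\<And>k. k \<ge> K \<Longrightarrow> of_int k * (of_int k * of_int k + 2 * c) = 0"
  shows False
proof -
  have "of_int K * (of_int K * of_int K + 2 * c) = 0" using assms by simp
  then have "of_int K * of_int K + 2 * c = 0" using assms(1) by simp
  moreover have "of_int (K + 1) * (of_int (K + 1) * of_int (K + 1) + 2 * c) = 0" using assms(2)[of "K + 1"] by simp
  then have "of_int (K + 1) * of_int (K + 1) + 2 * c = 0" using assms(1) by (simp del: of_int_add)
  moreover have "(of_int (2 * K + 1) :: complex) = (of_int (K + 1) * of_int (K + 1) + 2 * c) - (of_int K * of_int K + 2 * c)"
    by (simp add: algebra_simps)
  ultimately have "(of_int (2 * K + 1) :: complex) = 0" by simp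
  then have "2 * K + 1 = 0" by (simp only: of_int_eq_0_iff)
  then show False by presburger
qed

lemma ncob01: "\<not> is_coboundary 0 1 d1_01"
proof
  assume cob: "is_coboundary 0 1 d1_01"
  obtain v where fv: "finite (supp v)" and hv: "\<And>n p. d1_01 n p = actL 0 1 n v p" using cob_D[OF cob] by blast
  obtain N where hN: "\<And>a b. N \<le> a \<or> N \<le> b \<Longrightarrow> v (a, b) = 0" using supp_bound[OF fv] by blast
  show False
  proof (rule helper1[of "max N 1"])
    fix k :: int assume k: "k \<ge> max N 1"
    have "v (-k, k) = 0" using hN k by auto
    moreover have "d1_01 k (0, k) = actL 0 1 k v (0, k)" by (rule hv)
    ultimately show "of_int k * (of_int k + v (0, 0)) = 0"
      by (simp add: cf01 f01_def actL_def power2_eq_square algebra_simps)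
  qed simp
qed

lemma ncob10: "\<not> is_coboundary 1 0 d1_10"
proof
  assume cob: "is_coboundary 1 0 d1_10"
  obtain v where fv: "finite (supp v)" and hv: "\<And>n p. d1_10 n p = actL 1 0 n v p" using cob_D[OF cob] by blast
  obtain N where hN: "\<And>a b. N \<le> a \<or> N \<le> b \<Longrightarrow> v (a, b) = 0" using supp_bound[OF fv] by blast
  show False
  proof (rule helper1[of "max N 1"])
    fix k :: int assume k: "k \<ge> max N 1"
    have "v (k, -k) = 0" using hN k by auto
    moreover have "d1_10 k (k, 0) = actL 1 0 k v (k, 0)" by (rule hv)
    ultimately show "of_int k * (of_int k + v (0, 0)) = 0"
      by (simp add: cf10 f10_def actL_def power2_eq_square algebra_simps)
  qed simp
qed

lemma ncob02: "\<not> is_coboundary 0 2 d_02"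
proof
  assume cob: "is_coboundary 0 2 d_02"
  obtain v where fv: "finite (supp v)" and hv: "\<And>n p. d_02 n p = actL 0 2 n v p" using cob_D[OF cob] by blast
  obtain N where hN: "\<And>a b. N \<le> a \<or> N \<le> b \<Longrightarrow> v (a, b) = 0" using supp_bound[OF fv] by blast
  show False
  proof (rule helper2[of "max N 1"])
    fix k :: int assume k: "k \<ge> max N 1"
    have "v (-k, k) = 0" using hN k by auto
    moreover have "d_02 k (0, k) = actL 0 2 k v (0, k)" by (rule hv)
    ultimately show "of_int k * (of_int k * of_int k + 2 * v (0, 0)) = 0"
      by (simp add: cf02 f02_def actL_def power3_eq_cube algebra_simps)
  qed simp
qed

lemma ncob20: "\<not> is_coboundary 2 0 d_20"
proof
  assume cob: "is_coboundary 2 0 d_20"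
  obtain v where fv: "finite (supp v)" and hv: "\<And>n p. d_20 n p = actL 2 0 n v p" using cob_D[OF cob] by blast
  obtain N where hN: "\<And>a b. N \<le> a \<or> N \<le> b \<Longrightarrow> v (a, b) = 0" using supp_bound[OF fv] by blast
  show False
  proof (rule helper2[of "max N 1"])
    fix k :: int assume k: "k \<ge> max N 1"
    have "v (k, -k) = 0" using hN k by auto
    moreover have "d_20 k (k, 0) = actL 2 0 k v (k, 0)" by (rule hv)
    ultimately show "of_int k * (of_int k * of_int k + 2 * v (0, 0)) = 0"
      by (simp add: cf20 f20_def actL_def power3_eq_cube algebra_simps)
  qed simp
qed

lemma ncob11: "\<not> is_coboundary 1 1 d_11"
proof
  assume cob: "is_coboundary 1 1 d_11"
  obtain v where fv: "finite (supp v)" and hv: "\<And>n p. d_11 n p = actL 1 1 n v p" using cob_D[OF cob] by blast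
  obtain N where hN: "\<And>a b. N \<le> a \<or> N \<le> b \<Longrightarrow> v (a, b) = 0" using supp_bound[OF fv] by blast
  define j where "j = max N 1"
  have j1: "j \<ge> 1" and jN: "j \<ge> N" by (auto simp: j_def)
  have z: "v (-j, j) = 0" "v (j, -j) = 0" using hN jN by auto
  have "d_11 (j + j) (j, j) = actL 1 1 (j + j) v (j, j)" by (rule hv)
  then have "(of_int (j * j) :: complex) = 0"
    using z j1 by (simp add: cf11 f11_def actL_def)
  then have "j * j = 0" by (simp only: of_int_eq_0_iff)
  with j1 show False by simp
qed

lemma d_beta_pos: "n \<ge> 1 \<Longrightarrow> d_beta \<beta> n (a, b) = (if 0 \<le> a \<and> a \<le> n - 1 \<and> b = n - a then of_int a - of_int n * \<beta> else 0)"
  by (simp add: d_beta_def sum_vv_pt)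

lemma li01: "lin_indep2 d1_01 d_01"
  unfolding lin_indep2_def
proof (intro allI impI)
  fix a b assume h: "\<forall>x\<in>Witt. smul a (lin_ext d1_01 x) + smul b (lin_ext d_01 x) = 0"
  have e: "smul a (d1_01 2) + smul b (d_01 2) = 0" using h[rule_format, OF L_Witt[of 2]] by (simp only: lin_ext_L)
  have e1: "a * d1_01 2 (1, 1) + b * d_01 2 (1, 1) = 0" using fun_cong[OF e, of "(1, 1)"] by (simp add: smul_def)
  have e2: "a * d1_01 2 (0, 2) + b * d_01 2 (0, 2) = 0" using fun_cong[OF e, of "(0, 2)"] by (simp add: smul_def)
  from e1 have b: "b = 0" by (simp add: cf01 f01_def d_01_def d_beta_pos)
  from e2 b have "a = 0" by (simp add: cf01 f01_def)
  with b show "a = 0 \<and> b = 0" by simp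
qed

lemma li10: "lin_indep2 d1_10 d_10"
  unfolding lin_indep2_def
proof (intro allI impI)
  fix a b assume h: "\<forall>x\<in>Witt. smul a (lin_ext d1_10 x) + smul b (lin_ext d_10 x) = 0"
  have e: "smul a (d1_10 2) + smul b (d_10 2) = 0" using h[rule_format, OF L_Witt[of 2]] by (simp only: lin_ext_L)
  have e1: "a * d1_10 2 (1, 1) + b * d_10 2 (1, 1) = 0" using fun_cong[OF e, of "(1, 1)"] by (simp add: smul_def)
  have e2: "a * d1_10 2 (2, 0) + b * d_10 2 (2, 0) = 0" using fun_cong[OF e, of "(2, 0)"] by (simp add: smul_def)
  from e1 have b: "b = 0" by (simp add: cf10 f10_def d_10_def d_beta_pos)
  from e2 b have "a = 0" by (simp add: cf10 f10_def)
  with b show "a = 0 \<and> b = 0" by simp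
qed

theorem propositionP3p1:
  shows "is_cocycle 0 1 d1_01 \<and> \<not> is_coboundary 0 1 d1_01
       \<and> is_cocycle 1 0 d1_10 \<and> \<not> is_coboundary 1 0 d1_10
       \<and> is_cocycle 0 2 d_02 \<and> \<not> is_coboundary 0 2 d_02
       \<and> is_cocycle 2 0 d_20 \<and> \<not> is_coboundary 2 0 d_20
       \<and> is_cocycle 1 1 d_11 \<and> \<not> is_coboundary 1 1 d_11
       \<and> lin_indep2 d1_01 d_01 \<and> lin_indep2 d1_10 d_10"
  using coc01 ncob01 coc10 ncob10 coc02 ncob02 coc20 ncob20 coc11 ncob11 li01 li10 by blast

end
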